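(* Let $\phi$ be a scoring rule such that there exists $g:[0,1]\to\mathbb{R}$ with $\phi(x,e_k)=g(x_k)$ for all $k\in\{1,\dots,K\}$ and all score vectors $x$. For each $k$ define $h_k(q):=-g(q)\,q$ (i.e. $h_k(p)=-\phi(p,e_k)p_k$, the $k$-th component of the negative entropy of $\phi$). Let $C=(C_1,\dots,C_K)$ with $C_k:=\mathbb{E}[Q_k\mid S_k]$. Then $$\mathrm{GL}(S):=\mathbb{E}[d_\phi(C,Q)]=\sum_{k=1}^K\mathbb{E}\big[\mathrm{Var}_{h_k}(Q_k\mid S_k)\big].$$
   Context: Let $(X,Y)$ be jointly distributed with $X\in\mathcal{X}$ and $Y\in\{e_1,\dots,e_K\}$ (one-hot vectors of $\mathbb{R}^K$); $Q_k:=P(Y=e_k\mid X)$; $S=(S_1,\dots,S_K)=f(X)$ in the probability simplex for a classifier $f$. For a scoring rule $\phi$, $s_\phi(P,q):=\sum_k\phi(P,e_k)q_k$ and $d_\phi(P,q):=s_\phi(P,q)-s_\phi(q,q)$. For $f:\mathbb{R}\to\mathbb{R}$, $\mathrm{Var}_f(U\mid V):=\mathbb{E}[f(U)\mid V]-f(\mathbb{E}[U\mid V])$. All required expectations are assumed to exist. *)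

theory Defs
  imports "HOL-Probability.Probability"
begin

text \<open>Classes are indexed by k in {..<K} (k stands for the one-hot vector e_(k+1)).
  A scoring rule is phi :: (nat => real) => nat => real, phi P k = phi(P, e_k).\<close>

definition s_phi :: "nat \<Rightarrow> ((nat \<Rightarrow> real) \<Rightarrow> nat \<Rightarrow> real) \<Rightarrow> (nat \<Rightarrow> real) \<Rightarrow> (nat \<Rightarrow> real) \<Rightarrow> real" where
  "s_phi K phi P q = (\<Sum>k<K. phi P k * q k)"

definition d_phi :: "nat \<Rightarrow> ((nat \<Rightarrow> real) \<Rightarrow> nat \<Rightarrow> real) \<Rightarrow> (nat \<Rightarrow> real) \<Rightarrow> (nat \<Rightarrow> real) \<Rightarrow> real" where
  "d_phi K phi P q = s_phi K phi P q - s_phi K phi q q"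

definition cond_var_f :: "'a measure \<Rightarrow> 'a measure \<Rightarrow> (real \<Rightarrow> real) \<Rightarrow> ('a \<Rightarrow> real) \<Rightarrow> 'a \<Rightarrow> real" where
  "cond_var_f M F f U = (\<lambda>\<omega>. real_cond_exp M F (\<lambda>x. f (U x)) \<omega> - f (real_cond_exp M F U \<omega>))"

end

theory Submission
  imports Defs
begin

lemma sfs_vimage:
  assumes "prob_space M" "h \<in> measurable M N'"
  shows "sigma_finite_subalgebra M (vimage_algebra (space M) h N')"
proof -
  interpret prob_space M by fact
  have "subalgebra M (vimage_algebra (space M) h N')"
    unfolding subalgebra_def using sets_image_in_sets[OF refl assms(2)] by simp
  then have "finite_measure_subalgebra M (vimage_algebra (space M) h N')"
    by (simp add: finite_measure_subalgebra_def finite_measure_subalgebra_axioms_def finite_measure_axioms)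
  then show ?thesis by (rule finite_measure_subalgebra_is_sigma_finite)
qed

theorem lemma5:
  fixes M :: "'a measure" and N :: "'x measure"
    and X :: "'a \<Rightarrow> 'x" and Y :: "'a \<Rightarrow> nat" and K :: nat
    and f :: "'x \<Rightarrow> nat \<Rightarrow> real"
    and phi :: "(nat \<Rightarrow> real) \<Rightarrow> nat \<Rightarrow> real" and g :: "real \<Rightarrow> real"
    and Q S C :: "nat \<Rightarrow> 'a \<Rightarrow> real"
  assumes "prob_space M"
    and X_meas: "X \<in> measurable M N"
    and Y_meas: "Y \<in> measurable M (count_space UNIV)"
    and Y_range: "\<forall>\<omega>\<in>space M. Y \<omega> < K"
    and f_meas: "\<forall>k<K. (\<lambda>x. f x k) \<in> borel_measurable N"
    and f_simplex: "\<forall>x\<in>space N. (\<forall>k<K. 0 \<le> f x k) \<and> (\<Sum>k<K. f x k) = 1"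
    and g_meas: "g \<in> borel_measurable borel"
    and phi_g: "\<forall>x. (\<forall>j<K. x j \<in> {0..1}) \<longrightarrow> (\<forall>k<K. phi x k = g (x k))"
    and Q_def: "\<forall>k. Q k = real_cond_exp M (vimage_algebra (space M) X N)
                                (indicator {\<omega>\<in>space M. Y \<omega> = k})"
    and S_def: "\<forall>k. S k = (\<lambda>\<omega>. f (X \<omega>) k)"
    and C_def: "\<forall>k. C k = real_cond_exp M (vimage_algebra (space M) (S k) borel) (Q k)"
    and int_GL: "integrable M (\<lambda>\<omega>. d_phi K phi (\<lambda>k. C k \<omega>) (\<lambda>k. Q k \<omega>))"
    and int_QQ: "\<forall>k<K. integrable M (\<lambda>\<omega>. g (Q k \<omega>) * Q k \<omega>)"
    and int_CQ: "\<forall>k<K. integrable M (\<lambda>\<omega>. g (C k \<omega>) * Q k \<omega>)"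
    and int_CC: "\<forall>k<K. integrable M (\<lambda>\<omega>. g (C k \<omega>) * C k \<omega>)"
  shows "(\<integral>\<omega>. d_phi K phi (\<lambda>k. C k \<omega>) (\<lambda>k. Q k \<omega>) \<partial>M)
       = (\<Sum>k<K. \<integral>\<omega>. cond_var_f M (vimage_algebra (space M) (S k) borel)
                                     (\<lambda>q. - g q * q) (Q k) \<omega> \<partial>M)"
proof -
  interpret prob_space M by fact
  define G where "G = vimage_algebra (space M) X N"
  define F where "F = (\<lambda>k. vimage_algebra (space M) (S k) borel)"
  have sG: "sigma_finite_subalgebra M G" unfolding G_def by (rule sfs_vimage[OF \<open>prob_space M\<close> X_meas])
  have Smeas: "S k \<in> borel_measurable M" if "k < K" for k
    using S_def measurable_compose[OF X_meas, of "\<lambda>x. f x k"] f_meas that by simp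
  have sF: "sigma_finite_subalgebra M (F k)" if "k < K" for k
    unfolding F_def by (rule sfs_vimage[OF \<open>prob_space M\<close> Smeas[OF that]])
  have Qeq: "Q k = real_cond_exp M G (indicator {\<omega>\<in>space M. Y \<omega> = k})" for k
    using Q_def G_def by simp
  have Ceq: "C k = real_cond_exp M (F k) (Q k)" for k
    using C_def F_def by simp
  have Yset: "{\<omega>\<in>space M. Y \<omega> = k} \<in> sets M" for k
    using Y_meas by measurable
  have intI: "integrable M (indicator {\<omega>\<in>space M. Y \<omega> = k} :: 'a \<Rightarrow> real)" for k
    using Yset[of k] by (intro integrable_real_indicator) (auto simp: emeasure_eq_measure)
  have Qm: "Q k \<in> borel_measurable M" for k unfolding Qeq by simp
  have Cm: "C k \<in> borel_measurable M" for k unfolding Ceq by simp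
  have CmF: "C k \<in> borel_measurable (F k)" for k unfolding Ceq by simp
  have intQ: "integrable M (Q k)" for k
    unfolding Qeq using sigma_finite_subalgebra.real_cond_exp_int(1)[OF sG intI] .
  have Q01: "AE \<omega> in M. 0 \<le> Q k \<omega> \<and> Q k \<omega> \<le> 1" for k
  proof -
    have "AE \<omega> in M. 0 \<le> Q k \<omega>" unfolding Qeq
      by (rule sigma_finite_subalgebra.real_cond_exp_ge_c[OF sG intI]) simp
    moreover have "AE \<omega> in M. Q k \<omega> \<le> 1" unfolding Qeq
      by (rule sigma_finite_subalgebra.real_cond_exp_le_c[OF sG intI]) (simp add: indicator_def)
    ultimately show ?thesis by auto
  qed
  have C01: "AE \<omega> in M. 0 \<le> C k \<omega> \<and> C k \<omega> \<le> 1" if "k < K" for k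
  proof -
    have "AE \<omega> in M. 0 \<le> C k \<omega>" unfolding Ceq
      by (rule sigma_finite_subalgebra.real_cond_exp_ge_c[OF sF[OF that] intQ]) (use Q01[of k] in auto)
    moreover have "AE \<omega> in M. C k \<omega> \<le> 1" unfolding Ceq
      by (rule sigma_finite_subalgebra.real_cond_exp_le_c[OF sF[OF that] intQ]) (use Q01[of k] in auto)
    ultimately show ?thesis by auto
  qed
  have allQ: "AE \<omega> in M. \<forall>j\<in>{..<K}. 0 \<le> Q j \<omega> \<and> Q j \<omega> \<le> 1"
    using Q01 by (subst AE_finite_all) auto
  have allC: "AE \<omega> in M. \<forall>j\<in>{..<K}. 0 \<le> C j \<omega> \<and> C j \<omega> \<le> 1"
    using C01 by (subst AE_finite_all) auto
  have AEd: "AE \<omega> in M. d_phi K phi (\<lambda>k. C k \<omega>) (\<lambda>k. Q k \<omega>)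
      = (\<Sum>k<K. g (C k \<omega>) * Q k \<omega> - g (Q k \<omega>) * Q k \<omega>)"
    using allQ allC
  proof eventually_elim
    case (elim \<omega>)
    have pC: "\<forall>k<K. phi (\<lambda>k. C k \<omega>) k = g (C k \<omega>)"
      using phi_g elim(2) by auto
    have pQ: "\<forall>k<K. phi (\<lambda>k. Q k \<omega>) k = g (Q k \<omega>)"
      using phi_g elim(1) by auto
    show ?case unfolding d_phi_def s_phi_def
      using pC pQ by (simp add: sum_subtractf)
  qed
  have gCm: "(\<lambda>\<omega>. g (C k \<omega>)) \<in> borel_measurable (F k)" for k
    using measurable_compose[OF CmF g_meas] by simp
  have key: "(\<integral>\<omega>. g (C k \<omega>) * Q k \<omega> \<partial>M) = (\<integral>\<omega>. g (C k \<omega>) * C k \<omega> \<partial>M)" if "k < K" for k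
    unfolding Ceq
    using sigma_finite_subalgebra.real_cond_exp_intg(2)[OF sF[OF that], of "\<lambda>\<omega>. g (C k \<omega>)" "Q k"]
      int_CQ that gCm Qm unfolding Ceq by simp
  have "(\<integral>\<omega>. d_phi K phi (\<lambda>k. C k \<omega>) (\<lambda>k. Q k \<omega>) \<partial>M)
      = (\<integral>\<omega>. (\<Sum>k<K. g (C k \<omega>) * Q k \<omega> - g (Q k \<omega>) * Q k \<omega>) \<partial>M)"
  proof (rule integral_cong_AE)
    show "(\<lambda>\<omega>. d_phi K phi (\<lambda>k. C k \<omega>) (\<lambda>k. Q k \<omega>)) \<in> borel_measurable M"
      using int_GL by (rule borel_measurable_integrable)
    show "(\<lambda>\<omega>. \<Sum>k<K. g (C k \<omega>) * Q k \<omega> - g (Q k \<omega>) * Q k \<omega>) \<in> borel_measurable M"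
      using Cm Qm g_meas by measurable
  qed (rule AEd)
  also have "\<dots> = (\<Sum>k<K. (\<integral>\<omega>. g (C k \<omega>) * Q k \<omega> - g (Q k \<omega>) * Q k \<omega> \<partial>M))"
  proof (rule Bochner_Integration.integral_sum)
    fix k assume "k \<in> {..<K}"
    then show "integrable M (\<lambda>\<omega>. g (C k \<omega>) * Q k \<omega> - g (Q k \<omega>) * Q k \<omega>)"
      using int_CQ int_QQ by auto
  qed
  also have "\<dots> = (\<Sum>k<K. (\<integral>\<omega>. g (C k \<omega>) * C k \<omega> \<partial>M) - (\<integral>\<omega>. g (Q k \<omega>) * Q k \<omega> \<partial>M))"
    by (rule sum.cong) (use int_CQ int_QQ key in auto)
  also have "\<dots> = (\<Sum>k<K. \<integral>\<omega>. cond_var_f M (vimage_algebra (space M) (S k) borel)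
                                     (\<lambda>q. - g q * q) (Q k) \<omega> \<partial>M)"
  proof (rule sum.cong)
    fix k assume "k \<in> {..<K}"
    then have k: "k < K" by simp
    have ih: "integrable M (\<lambda>\<omega>. - g (Q k \<omega>) * Q k \<omega>)"
      using int_QQ k by simp
    have i1: "integrable M (real_cond_exp M (F k) (\<lambda>\<omega>. - g (Q k \<omega>) * Q k \<omega>))"
      by (rule sigma_finite_subalgebra.real_cond_exp_int(1)[OF sF[OF k] ih])
    have e1: "(\<integral>\<omega>. real_cond_exp M (F k) (\<lambda>\<omega>. - g (Q k \<omega>) * Q k \<omega>) \<omega> \<partial>M)
        = (\<integral>\<omega>. - g (Q k \<omega>) * Q k \<omega> \<partial>M)"
      by (rule sigma_finite_subalgebra.real_cond_exp_int(2)[OF sF[OF k] ih])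
    have i2: "integrable M (\<lambda>\<omega>. - g (C k \<omega>) * C k \<omega>)" using int_CC k by simp
    have "(\<integral>\<omega>. cond_var_f M (F k) (\<lambda>q. - g q * q) (Q k) \<omega> \<partial>M)
       = (\<integral>\<omega>. real_cond_exp M (F k) (\<lambda>\<omega>. - g (Q k \<omega>) * Q k \<omega>) \<omega> - (- g (C k \<omega>) * C k \<omega>) \<partial>M)"
      unfolding cond_var_f_def Ceq by simp
    also have "\<dots> = (\<integral>\<omega>. - g (Q k \<omega>) * Q k \<omega> \<partial>M) - (\<integral>\<omega>. - g (C k \<omega>) * C k \<omega> \<partial>M)"
      using Bochner_Integration.integral_diff[OF i1 i2] e1 by simp
    finally show "(\<integral>\<omega>. g (C k \<omega>) * C k \<omega> \<partial>M) - (\<integral>\<omega>. g (Q k \<omega>) * Q k \<omega> \<partial>M)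
      = (\<integral>\<omega>. cond_var_f M (vimage_algebra (space M) (S k) borel) (\<lambda>q. - g q * q) (Q k) \<omega> \<partial>M)"
      unfolding F_def by simp
  qed simp
  finally show ?thesis .
qed

end
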